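(* Let $G$ be a bipartite graph and let $M$ be a maximum matching in $G$ such that $\mathrm{diss}(G)=\frac{4}{3}\alpha(G-M)$. Then $\alpha(G-M)=\alpha(G)$, the graphs $G$ and $G-M$ have the same matching number, and for every maximum dissociation set $I$ of $G$, the induced subgraph $G[I]$ is $1$-regular and exactly half of the edges of $G[I]$ belong to $M$ (so $|E(G[I])\cap M|=\frac{\mathrm{diss}(G)}{4}$).
   Context: All graphs are finite, simple and undirected. A set $I$ of vertices of a graph $G$ is a dissociation set if the induced subgraph $G[I]$ has maximum degree at most $1$; $\mathrm{diss}(G)$ is the maximum order of a dissociation set in $G$. $\alpha(H)$ denotes the independence number of $H$. For a set $M$ of edges, $G-M$ is the graph on $V(G)$ with edge set $E(G)\setminus M$. *)

theory Defs
  imports Complex_Main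
begin

definition simple_graph :: "'a set \<Rightarrow> 'a set set \<Rightarrow> bool" where
  "simple_graph V E \<longleftrightarrow> finite V \<and>
     (\<forall>e\<in>E. \<exists>u v. e = {u, v} \<and> u \<noteq> v \<and> u \<in> V \<and> v \<in> V)"

definition bipartite :: "'a set \<Rightarrow> 'a set set \<Rightarrow> bool" where
  "bipartite V E \<longleftrightarrow> (\<exists>A B. A \<union> B = V \<and> A \<inter> B = {} \<and>
     (\<forall>e\<in>E. card (e \<inter> A) = 1 \<and> card (e \<inter> B) = 1))"

definition matching :: "'a set set \<Rightarrow> 'a set set \<Rightarrow> bool" where
  "matching E M \<longleftrightarrow> M \<subseteq> E \<and> (\<forall>e\<in>M. \<forall>f\<in>M. e \<noteq> f \<longrightarrow> e \<inter> f = {})"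

definition max_matching :: "'a set set \<Rightarrow> 'a set set \<Rightarrow> bool" where
  "max_matching E M \<longleftrightarrow> matching E M \<and> (\<forall>M'. matching E M' \<longrightarrow> card M' \<le> card M)"

definition matching_number :: "'a set set \<Rightarrow> nat" where
  "matching_number E = Max {card M | M. matching E M}"

definition indep_set :: "'a set \<Rightarrow> 'a set set \<Rightarrow> 'a set \<Rightarrow> bool" where
  "indep_set V E S \<longleftrightarrow> S \<subseteq> V \<and> (\<forall>e\<in>E. \<not> e \<subseteq> S)"

definition alpha :: "'a set \<Rightarrow> 'a set set \<Rightarrow> nat" where
  "alpha V E = Max {card S | S. indep_set V E S}"

definition induced_edges :: "'a set set \<Rightarrow> 'a set \<Rightarrow> 'a set set" where
  "induced_edges E S = {e \<in> E. e \<subseteq> S}"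

definition induced_degree :: "'a set set \<Rightarrow> 'a set \<Rightarrow> 'a \<Rightarrow> nat" where
  "induced_degree E S v = card {e \<in> induced_edges E S. v \<in> e}"

definition diss_set :: "'a set \<Rightarrow> 'a set set \<Rightarrow> 'a set \<Rightarrow> bool" where
  "diss_set V E S \<longleftrightarrow> S \<subseteq> V \<and> (\<forall>v\<in>S. induced_degree E S v \<le> 1)"

definition diss :: "'a set \<Rightarrow> 'a set set \<Rightarrow> nat" where
  "diss V E = Max {card S | S. diss_set V E S}"

definition max_diss_set :: "'a set \<Rightarrow> 'a set set \<Rightarrow> 'a set \<Rightarrow> bool" where
  "max_diss_set V E S \<longleftrightarrow> diss_set V E S \<and> card S = diss V E"

end

theory Submission
  imports Defs
begin


lemma hall:
  assumes "finite X" "\<forall>x\<in>X. finite (N x)"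
    "\<forall>S\<subseteq>X. card S \<le> card (\<Union>(N ` S))"
  shows "\<exists>f. inj_on f X \<and> (\<forall>x\<in>X. f x \<in> N x)"
  using assms
proof (induction "card X" arbitrary: X N rule: less_induct)
  case less
  show ?case
  proof (cases "X = {}")
    case True then show ?thesis by auto
  next
    case False
    show ?thesis
    proof (cases "\<exists>S. S \<noteq> {} \<and> S \<subset> X \<and> card (\<Union>(N ` S)) = card S")
      case True
      then obtain S where S: "S \<noteq> {}" "S \<subset> X" "card (\<Union>(N ` S)) = card S" by blast
      have fS: "finite S" using S less.prems(1) finite_subset by blast
      have cS: "card S < card X" using S less.prems(1) psubset_card_mono by blast
      have h1: "\<forall>x\<in>S. finite (N x)" using S less.prems(2) by auto
      have h2: "\<forall>T\<subseteq>S. card T \<le> card (\<Union>(N ` T))" using S less.prems(3) by auto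
      obtain f1 where f1: "inj_on f1 S" "\<forall>x\<in>S. f1 x \<in> N x"
        using less.hyps[OF cS fS h1 h2] by auto
      define Y where "Y = \<Union>(N ` S)"
      have fY: "finite Y" unfolding Y_def using fS S less.prems(2) by auto
      define N' where "N' = (\<lambda>x. N x - Y)"
      have cXS: "card (X - S) < card X"
      proof -
        have "card S > 0" using S fS by (simp add: card_gt_0_iff)
        moreover have "card (X - S) = card X - card S" using S fS by (simp add: card_Diff_subset)
        moreover have "card S \<le> card X" using cS by simp
        ultimately show ?thesis by linarith
      qed
      have hallN': "\<forall>T\<subseteq>X - S. card T \<le> card (\<Union>(N' ` T))"
      proof (intro allI impI)
        fix T assume T: "T \<subseteq> X - S"
        have fT: "finite T" using T less.prems(1) finite_subset by blast
        have "card (T \<union> S) \<le> card (\<Union>(N ` (T \<union> S)))"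
          using less.prems(3) T S by (metis Diff_subset Un_subset_iff order_trans psubset_imp_subset)
        moreover have "card (T \<union> S) = card T + card S"
          using T fT fS by (subst card_Un_disjoint) auto
        moreover have "\<Union>(N ` (T \<union> S)) = \<Union>(N' ` T) \<union> Y"
          unfolding N'_def Y_def by auto
        moreover have "card (\<Union>(N' ` T) \<union> Y) = card (\<Union>(N' ` T)) + card Y"
          apply (subst card_Un_disjoint)
          using fT fY less.prems(2) T unfolding N'_def by auto
        ultimately show "card T \<le> card (\<Union>(N' ` T))"
          using S(3) unfolding Y_def by simp
      qed
      obtain f2 where f2: "inj_on f2 (X - S)" "\<forall>x\<in>X - S. f2 x \<in> N' x"
        using less.hyps[OF cXS, of N'] hallN' less.prems(1,2) unfolding N'_def by auto
      define f where "f = (\<lambda>x. if x \<in> S then f1 x else f2 x)"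
      have "inj_on f X"
        unfolding inj_on_def f_def
      proof (intro ballI impI)
        fix u v assume uv: "u \<in> X" "v \<in> X" "(if u \<in> S then f1 u else f2 u) = (if v \<in> S then f1 v else f2 v)"
        show "u = v"
        proof (cases "u \<in> S"; cases "v \<in> S")
          assume "u \<in> S" "v \<in> S" then show ?thesis using uv f1(1) by (auto simp: inj_on_def)
        next
          assume "u \<notin> S" "v \<notin> S" then show ?thesis using uv f2(1) by (auto simp: inj_on_def)
        next
          assume a: "u \<in> S" "v \<notin> S"
          then have "f1 u \<in> Y" using f1(2) unfolding Y_def by auto
          moreover have "f2 v \<notin> Y" using f2(2) a uv(2) unfolding N'_def by blast
          ultimately show ?thesis using uv a by auto
        next
          assume a: "u \<notin> S" "v \<in> S"
          then have "f1 v \<in> Y" using f1(2) unfolding Y_def by auto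
          moreover have "f2 u \<notin> Y" using f2(2) a uv(1) unfolding N'_def by blast
          ultimately show ?thesis using uv a by auto
        qed
      qed
      moreover have "\<forall>x\<in>X. f x \<in> N x" using f1 f2 unfolding f_def N'_def by auto
      ultimately show ?thesis by blast
    next
      case False2: False
      obtain x where x: "x \<in> X" using False by blast
      have "card {x} \<le> card (N x)" using less.prems(3) x by (metis empty_subsetI insert_subset ccpo_Sup_singleton image_empty image_insert)
      then have "N x \<noteq> {}" by auto
      then obtain y where y: "y \<in> N x" by blast
      define N' where "N' = (\<lambda>z. N z - {y})"
      have cX: "card (X - {x}) < card X" using x less.prems(1)
        by (meson card_Diff1_less)
      have hallN': "\<forall>T\<subseteq>X - {x}. card T \<le> card (\<Union>(N' ` T))"
      proof (intro allI impI)
        fix T assume T: "T \<subseteq> X - {x}"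
        show "card T \<le> card (\<Union>(N' ` T))"
        proof (cases "T = {}")
          case True then show ?thesis by simp
        next
          case False
          have fT: "finite T" using T less.prems(1) finite_subset by blast
          have "T \<subset> X" using T x by auto
          then have "card (\<Union>(N ` T)) \<noteq> card T" using False2 False by blast
          moreover have "card T \<le> card (\<Union>(N ` T))" using less.prems(3) T by auto
          moreover have "\<Union>(N' ` T) = \<Union>(N ` T) - {y}" unfolding N'_def by auto
          moreover have "finite (\<Union>(N ` T))" using fT less.prems(2) T by auto
          moreover have "card (\<Union>(N ` T)) - 1 \<le> card (\<Union>(N ` T) - {y})"
            by (cases "y \<in> \<Union>(N ` T)") (simp_all add: card_Diff_singleton del: UN_simps)
          ultimately have "card T \<le> card (\<Union>(N ` T) - {y})" by arith
          then show ?thesis using \<open>\<Union>(N' ` T) = \<Union>(N ` T) - {y}\<close> by simp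
        qed
      qed
      obtain f2 where f2: "inj_on f2 (X - {x})" "\<forall>z\<in>X - {x}. f2 z \<in> N' z"
        using less.hyps[OF cX, of N'] hallN' less.prems(1,2) unfolding N'_def by auto
      define f where "f = f2(x := y)"
      have "inj_on f X"
        unfolding inj_on_def f_def
      proof (intro ballI impI)
        fix u v assume uv: "u \<in> X" "v \<in> X" "(f2(x := y)) u = (f2(x := y)) v"
        have ne: "\<And>z. z \<in> X - {x} \<Longrightarrow> f2 z \<noteq> y" using f2(2) unfolding N'_def by auto
        show "u = v"
          using uv ne f2(1) unfolding inj_on_def
          by (cases "u = x"; cases "v = x") (simp_all, metis DiffI singletonD)
      qed
      moreover have "\<forall>z\<in>X. f z \<in> N z" using f2 y unfolding f_def N'_def by auto
      ultimately show ?thesis by blast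
    qed
  qed
qed



lemma pair_disj:
  assumes "x1 \<in> A" "x2 \<in> A" "y1 \<in> B" "y2 \<in> B" "A \<inter> B = {}" "x1 \<noteq> x2" "y1 \<noteq> y2"
  shows "{x1,y1} \<inter> {x2,y2} = {}"
  using assms by auto

lemma konig:
  assumes fin: "finite V" and AB: "A \<union> B = V" "A \<inter> B = {}"
    and edges: "\<forall>e\<in>E. \<exists>a b. e = {a,b} \<and> a \<in> A \<and> b \<in> B"
  shows "\<exists>S N. indep_set V E S \<and> matching E N \<and> card V \<le> card S + card N"
proof -
  have finA: "finite A" and finB: "finite B" using fin AB by auto
  have adj: "\<And>x y. {x,y} \<in> E \<Longrightarrow> x \<in> A \<Longrightarrow> y \<in> B"
  proof -
    fix x y assume "{x,y} \<in> E" "x \<in> A"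
    then obtain a b where "{x,y} = {a,b}" "a \<in> A" "b \<in> B" using edges by blast
    then show "y \<in> B" using AB(2) \<open>x \<in> A\<close> by (auto simp: doubleton_eq_iff)
  qed
  define nb where "nb a = {b. {a,b} \<in> E}" for a
  define NS where "NS S = \<Union>(nb ` S)" for S
  have nbB: "\<And>a. a \<in> A \<Longrightarrow> nb a \<subseteq> B"
  proof
    fix a b assume "a \<in> A" "b \<in> nb a"
    then show "b \<in> B" using adj[of a b] unfolding nb_def by simp
  qed
  have NSB: "\<And>S. S \<subseteq> A \<Longrightarrow> NS S \<subseteq> B"
  proof -
    fix S assume "S \<subseteq> A"
    then show "NS S \<subseteq> B" unfolding NS_def using nbB by blast
  qed
  have finNS: "\<And>S. S \<subseteq> A \<Longrightarrow> finite (NS S)" using NSB finB by (rule finite_subset)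
  define \<phi> where "\<phi> S = card (A - S) + card (NS S)" for S
  obtain S0 where S0A: "S0 \<subseteq> A" and S0min: "\<And>S. S \<subseteq> A \<Longrightarrow> \<phi> S0 \<le> \<phi> S"
    using ex_has_least_nat[of "\<lambda>S. S \<subseteq> A" "{}" \<phi>] by blast
  define N1 where "N1 a = nb a - NS S0" for a
  have hall1: "\<forall>T\<subseteq>A - S0. card T \<le> card (\<Union>(N1 ` T))"
  proof (intro allI impI)
    fix T assume T: "T \<subseteq> A - S0"
    have TA: "T \<subseteq> A" using T by auto
    have fT: "finite T" using T finA finite_subset by blast
    have "\<phi> S0 \<le> \<phi> (S0 \<union> T)" using S0min S0A TA by auto
    moreover have "card (A - S0) = card (A - (S0 \<union> T)) + card T"
    proof -
      have "A - S0 = (A - (S0 \<union> T)) \<union> T" using T by auto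
      moreover have "(A - (S0 \<union> T)) \<inter> T = {}" by auto
      ultimately show ?thesis using fT finA by (simp add: card_Un_disjoint)
    qed
    moreover have "card (NS (S0 \<union> T)) = card (NS S0) + card (NS T - NS S0)"
    proof -
      have "NS (S0 \<union> T) = NS S0 \<union> (NS T - NS S0)" unfolding NS_def by auto
      then show ?thesis using finNS[OF S0A] finNS[OF TA] card_Un_disjoint[of "NS S0" "NS T - NS S0"] by (metis Diff_disjoint finite_Diff)
    qed
    ultimately have "card T \<le> card (NS T - NS S0)" unfolding \<phi>_def by linarith
    moreover have "\<Union>(N1 ` T) = NS T - NS S0" unfolding N1_def NS_def by auto
    ultimately show "card T \<le> card (\<Union>(N1 ` T))" by simp
  qed
  have h1a: "finite (A - S0)" using finA by auto
  have h1b: "\<forall>x\<in>A - S0. finite (N1 x)" using nbB finB unfolding N1_def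
    by (meson DiffD1 finite_Diff finite_subset)
  obtain f where f: "inj_on f (A - S0)" "\<forall>a\<in>A - S0. f a \<in> N1 a"
    using hall[OF h1a h1b hall1] by blast
  define N2 where "N2 b = {a \<in> S0. {a,b} \<in> E}" for b
  have hall2: "\<forall>U\<subseteq>NS S0. card U \<le> card (\<Union>(N2 ` U))"
  proof (intro allI impI)
    fix U assume U: "U \<subseteq> NS S0"
    define W where "W = \<Union>(N2 ` U)"
    have WS0: "W \<subseteq> S0" unfolding W_def N2_def by blast
    have fW: "finite W" using finite_subset[OF WS0 finite_subset[OF S0A finA]] .
    have "\<phi> S0 \<le> \<phi> (S0 - W)" using S0min[of "S0 - W"] S0A by blast
    moreover have "card (A - (S0 - W)) = card (A - S0) + card W"
    proof -
      have "A - (S0 - W) = (A - S0) \<union> W" using WS0 S0A by auto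
      moreover have "(A - S0) \<inter> W = {}" using WS0 by blast
      ultimately show ?thesis using card_Un_disjoint[of "A - S0" W] fW finA by simp
    qed
    moreover have "card (NS (S0 - W)) \<le> card (NS S0) - card U"
    proof -
      have sub: "NS (S0 - W) \<subseteq> NS S0 - U"
      proof
        fix b assume "b \<in> NS (S0 - W)"
        then obtain a where a: "a \<in> S0 - W" "b \<in> nb a" unfolding NS_def by blast
        then have "b \<in> NS S0" unfolding NS_def by blast
        moreover have "b \<notin> U"
        proof
          assume "b \<in> U"
          then have "a \<in> N2 b" using a unfolding N2_def nb_def by simp
          then have "a \<in> W" using \<open>b \<in> U\<close> unfolding W_def by blast
          then show False using a by simp
        qed
        ultimately show "b \<in> NS S0 - U" by simp
      qed
      have fU: "finite U" using U finNS[OF S0A] by (rule finite_subset)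
      have "card (NS S0 - U) = card (NS S0) - card U"
        using card_Diff_subset[OF fU U] .
      moreover have "card (NS (S0 - W)) \<le> card (NS S0 - U)"
        using card_mono[OF finite_Diff[OF finNS[OF S0A]] sub] .
      ultimately show ?thesis by simp
    qed
    moreover have "card U \<le> card (NS S0)" using card_mono[OF finNS[OF S0A] U] .
    ultimately have "card U \<le> card W" unfolding \<phi>_def by linarith
    then show "card U \<le> card (\<Union>(N2 ` U))" unfolding W_def .
  qed
  have h2b: "\<forall>x\<in>NS S0. finite (N2 x)" using S0A finA unfolding N2_def
    by (metis (no_types, lifting) finite_subset mem_Collect_eq subsetI)
  obtain g where g: "inj_on g (NS S0)" "\<forall>b\<in>NS S0. g b \<in> N2 b"
    using hall[OF finNS[OF S0A] h2b hall2] by blast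
  have fB: "\<And>a. a \<in> A - S0 \<Longrightarrow> f a \<in> B \<and> f a \<notin> NS S0 \<and> {a, f a} \<in> E"
    using f(2) nbB unfolding N1_def nb_def by auto
  have gB: "\<And>b. b \<in> NS S0 \<Longrightarrow> g b \<in> S0 \<and> b \<in> B \<and> {g b, b} \<in> E"
    using g(2) NSB S0A unfolding N2_def by auto
  define N where "N = (\<lambda>a. {a, f a}) ` (A - S0) \<union> (\<lambda>b. {g b, b}) ` NS S0"
  have inj1: "inj_on (\<lambda>a. {a, f a}) (A - S0)"
  proof (rule inj_onI)
    fix a a' assume a: "a \<in> A - S0" "a' \<in> A - S0" "{a, f a} = {a', f a'}"
    then have "a \<in> {a', f a'}" by auto
    then show "a = a'" using fB[OF a(2)] a(1) AB(2) by auto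
  qed
  have inj2: "inj_on (\<lambda>b. {g b, b}) (NS S0)"
  proof (rule inj_onI)
    fix b b' assume b: "b \<in> NS S0" "b' \<in> NS S0" "{g b, b} = {g b', b'}"
    then have "b \<in> {g b', b'}" by auto
    then show "b = b'" using gB[OF b(2)] gB[OF b(1)] S0A AB(2) by auto
  qed
  have disj: "(\<lambda>a. {a, f a}) ` (A - S0) \<inter> (\<lambda>b. {g b, b}) ` NS S0 = {}"
  proof (rule ccontr)
    assume "\<not> ?thesis"
    then obtain a b where ab: "a \<in> A - S0" "b \<in> NS S0" "{a, f a} = {g b, b}" by blast
    then have "a \<in> {g b, b}" by auto
    then show False using ab gB[OF ab(2)] AB(2) by auto
  qed
  have cardN: "card N = card (A - S0) + card (NS S0)"
  proof -
    have c1: "card ((\<lambda>a. {a, f a}) ` (A - S0)) = card (A - S0)" by (rule card_image[OF inj1])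
    have c2: "card ((\<lambda>b. {g b, b}) ` NS S0) = card (NS S0)" by (rule card_image[OF inj2])
    have "card N = card ((\<lambda>a. {a, f a}) ` (A - S0)) + card ((\<lambda>b. {g b, b}) ` NS S0)"
      unfolding N_def
      by (rule card_Un_disjoint[OF finite_imageI finite_imageI disj])
         (use finA finNS[OF S0A] in auto)
    then show ?thesis using c1 c2 by simp
  qed
  have matchN: "matching E N"
    unfolding matching_def
  proof (intro conjI ballI impI)
    show "N \<subseteq> E" unfolding N_def using fB gB by blast
  next
    fix e e' assume e: "e \<in> N" "e' \<in> N" "e \<noteq> e'"
    have SB: "S0 \<subseteq> A" "NS S0 \<subseteq> B" using S0A NSB[OF S0A] by auto
    show "e \<inter> e' = {}"
    proof (cases "e \<in> (\<lambda>a. {a, f a}) ` (A - S0)"; cases "e' \<in> (\<lambda>a. {a, f a}) ` (A - S0)")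
      assume "e \<in> (\<lambda>a. {a, f a}) ` (A - S0)" "e' \<in> (\<lambda>a. {a, f a}) ` (A - S0)"
      then obtain a a' where a: "a \<in> A - S0" "a' \<in> A - S0" "e = {a, f a}" "e' = {a', f a'}" by blast
      then have "a \<noteq> a'" using e by blast
      moreover have "f a \<noteq> f a'" using f(1) a(1,2) \<open>a \<noteq> a'\<close> unfolding inj_on_def by blast
      ultimately show ?thesis unfolding a(3,4)
        by (intro pair_disj[OF _ _ _ _ AB(2)]) (use a(1,2) fB[OF a(1)] fB[OF a(2)] in blast)+
    next
      assume "e \<in> (\<lambda>a. {a, f a}) ` (A - S0)" "e' \<notin> (\<lambda>a. {a, f a}) ` (A - S0)"
      then obtain a b where a: "a \<in> A - S0" "b \<in> NS S0" "e = {a, f a}" "e' = {g b, b}"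
        using e unfolding N_def by blast
      have "a \<noteq> g b" using a(1) gB[OF a(2)] by blast
      moreover have "f a \<noteq> b" using fB[OF a(1)] a(2) by blast
      ultimately show ?thesis unfolding a(3,4)
        by (intro pair_disj[OF _ _ _ _ AB(2)]) (use a(1,2) fB[OF a(1)] gB[OF a(2)] SB in blast)+
    next
      assume "e \<notin> (\<lambda>a. {a, f a}) ` (A - S0)" "e' \<in> (\<lambda>a. {a, f a}) ` (A - S0)"
      then obtain a b where a: "a \<in> A - S0" "b \<in> NS S0" "e' = {a, f a}" "e = {g b, b}"
        using e unfolding N_def by blast
      have "g b \<noteq> a" using a(1) gB[OF a(2)] by blast
      moreover have "b \<noteq> f a" using fB[OF a(1)] a(2) by blast
      ultimately show ?thesis unfolding a(3,4)
        by (intro pair_disj[OF _ _ _ _ AB(2)]) (use a(1,2) fB[OF a(1)] gB[OF a(2)] SB in blast)+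
    next
      assume "e \<notin> (\<lambda>a. {a, f a}) ` (A - S0)" "e' \<notin> (\<lambda>a. {a, f a}) ` (A - S0)"
      then obtain b b' where b: "b \<in> NS S0" "b' \<in> NS S0" "e = {g b, b}" "e' = {g b', b'}"
        using e unfolding N_def by blast
      then have "b \<noteq> b'" using e by blast
      moreover have "g b \<noteq> g b'" using g(1) b(1,2) \<open>b \<noteq> b'\<close> unfolding inj_on_def by blast
      ultimately show ?thesis unfolding b(3,4)
        by (intro pair_disj[OF _ _ _ _ AB(2)]) (use b(1,2) gB[OF b(1)] gB[OF b(2)] SB \<open>b \<noteq> b'\<close> in blast)+
    qed
  qed
  define C where "C = (A - S0) \<union> NS S0"
  define S where "S = V - C"
  have CV: "C \<subseteq> V" unfolding C_def using AB NSB S0A by auto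
  have cardC: "card C = card (A - S0) + card (NS S0)"
    unfolding C_def using finA finNS[OF S0A] NSB[OF S0A] AB(2)
    by (subst card_Un_disjoint) auto
  have cardS: "card S = card V - card C" unfolding S_def using CV fin by (simp add: card_Diff_subset finite_subset)
  have "card C \<le> card V" using CV fin card_mono by blast
  have indS: "indep_set V E S"
    unfolding indep_set_def
  proof (intro conjI ballI)
    show "S \<subseteq> V" unfolding S_def by auto
  next
    fix e assume "e \<in> E"
    then obtain a b where ab: "e = {a,b}" "a \<in> A" "b \<in> B" using edges by blast
    show "\<not> e \<subseteq> S"
    proof
      assume "e \<subseteq> S"
      then have "a \<in> S0" "b \<notin> NS S0" using ab unfolding S_def C_def by auto
      moreover have "b \<in> nb a" using \<open>e \<in> E\<close> ab unfolding nb_def by auto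
      ultimately show False unfolding NS_def by auto
    qed
  qed
  show ?thesis using indS matchN cardN cardS cardC \<open>card C \<le> card V\<close>
    by (intro exI[of _ S] exI[of _ N]) auto
qed



lemma alpha_props:
  assumes "finite V" and ne0: "\<forall>e\<in>E. e \<noteq> {}"
  shows "\<exists>S. indep_set V E S \<and> card S = alpha V E"
    and "indep_set V E S \<Longrightarrow> card S \<le> alpha V E"
proof -
  have fin: "finite {card S | S. indep_set V E S}"
  proof (rule finite_subset[of _ "{..card V}"])
    show "{card S | S. indep_set V E S} \<subseteq> {..card V}"
      using assms by (auto simp: indep_set_def intro: card_mono)
  qed auto
  have ne: "{card S | S. indep_set V E S} \<noteq> {}"
    using ne0 by (auto simp: indep_set_def intro!: exI[of _ "{}"])
  show "\<exists>S. indep_set V E S \<and> card S = alpha V E"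
    using Max_in[OF fin ne] unfolding alpha_def by auto
  show "indep_set V E S \<Longrightarrow> card S \<le> alpha V E"
    unfolding alpha_def using fin by (auto intro: Max_ge)
qed

lemma nu_props:
  assumes "finite E"
  shows "\<exists>N. matching E N \<and> card N = matching_number E"
    and "matching E N \<Longrightarrow> card N \<le> matching_number E"
proof -
  have fin: "finite {card N | N. matching E N}"
  proof (rule finite_subset[of _ "{..card E}"])
    show "{card N | N. matching E N} \<subseteq> {..card E}"
      using assms by (auto simp: matching_def intro: card_mono)
  qed auto
  have ne: "{card N | N. matching E N} \<noteq> {}"
    by (auto simp: matching_def intro!: exI[of _ "{}"])
  show "\<exists>N. matching E N \<and> card N = matching_number E"
    using Max_in[OF fin ne] unfolding matching_number_def by auto
  show "matching E N \<Longrightarrow> card N \<le> matching_number E"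
    unfolding matching_number_def using fin by (auto intro: Max_ge)
qed

lemma diss_props:
  assumes "finite V"
  shows "\<exists>S. diss_set V E S \<and> card S = diss V E"
proof -
  have fin: "finite {card S | S. diss_set V E S}"
  proof (rule finite_subset[of _ "{..card V}"])
    show "{card S | S. diss_set V E S} \<subseteq> {..card V}"
      using assms by (auto simp: diss_set_def intro: card_mono)
  qed auto
  have ne: "{card S | S. diss_set V E S} \<noteq> {}"
    by (auto simp: diss_set_def intro!: exI[of _ "{}"])
  show ?thesis
    using Max_in[OF fin ne] unfolding diss_def by auto
qed

lemma easy_bound:
  assumes fin: "finite V" and ind: "indep_set V E S" and mt: "matching E N"
    and sub: "\<forall>e\<in>E. e \<subseteq> V"
  shows "card S + card N \<le> card V"
proof -
  have NE: "N \<subseteq> E" and dj: "\<And>e f. e \<in> N \<Longrightarrow> f \<in> N \<Longrightarrow> e \<noteq> f \<Longrightarrow> e \<inter> f = {}"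
    using mt unfolding matching_def by auto
  have nsub: "\<And>e. e \<in> E \<Longrightarrow> \<not> e \<subseteq> S" using ind unfolding indep_set_def by auto
  have ex: "\<forall>e\<in>N. \<exists>x. x \<in> e - S" using nsub NE by blast
  define h where "h e = (SOME x. x \<in> e - S)" for e
  have h: "\<And>e. e \<in> N \<Longrightarrow> h e \<in> e - S" unfolding h_def using ex by (metis someI_ex)
  have inj: "inj_on h N"
  proof (rule inj_onI)
    fix e e' assume "e \<in> N" "e' \<in> N" "h e = h e'"
    then have "h e \<in> e \<inter> e'" using h[of e] h[of e'] by simp
    then show "e = e'" using dj[of e e'] \<open>e \<in> N\<close> \<open>e' \<in> N\<close> by blast
  qed
  have "h ` N \<subseteq> V - S"
  proof
    fix x assume "x \<in> h ` N"
    then obtain e where "e \<in> N" "x = h e" by blast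
    then show "x \<in> V - S" using h[of e] sub NE by blast
  qed
  then have "card (h ` N) \<le> card (V - S)" using fin by (intro card_mono) auto
  moreover have "card (h ` N) = card N" using card_image[OF inj] .
  moreover have "card (V - S) = card V - card S"
    using ind fin unfolding indep_set_def by (meson card_Diff_subset finite_subset)
  moreover have "card S \<le> card V" using ind fin unfolding indep_set_def by (simp add: card_mono)
  ultimately show ?thesis by linarith
qed

lemma konig_eq:
  assumes fin: "finite V" and AB: "A \<union> B = V" "A \<inter> B = {}"
    and edges: "\<forall>e\<in>E. \<exists>a b. e = {a,b} \<and> a \<in> A \<and> b \<in> B"
  shows "alpha V E + matching_number E = card V"
proof -
  have sub: "\<forall>e\<in>E. e \<subseteq> V"
  proof
    fix e assume "e \<in> E"
    then obtain a b where "e = {a,b}" "a \<in> A" "b \<in> B" using edges by blast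
    then show "e \<subseteq> V" using AB(1) by blast
  qed
  have ne0: "\<forall>e\<in>E. e \<noteq> {}"
  proof
    fix e assume "e \<in> E"
    then obtain a b where "e = {a,b}" using edges by blast
    then show "e \<noteq> {}" by simp
  qed
  have "E \<subseteq> Pow V" using sub by blast
  then have finE: "finite E" using fin by (simp add: finite_subset)
  obtain S N where SN: "indep_set V E S" "matching E N" "card V \<le> card S + card N"
    using konig[OF fin AB edges] by blast
  obtain S1 where S1: "indep_set V E S1" "card S1 = alpha V E" using alpha_props(1)[OF fin ne0] by blast
  obtain N1 where N1: "matching E N1" "card N1 = matching_number E" using nu_props(1)[OF finE] by blast
  have "card S \<le> alpha V E" using alpha_props(2)[OF fin ne0 SN(1)] .
  moreover have "card N \<le> matching_number E" using nu_props(2)[OF finE SN(2)] .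
  moreover have "card S1 + card N1 \<le> card V" using easy_bound[OF fin S1(1) N1(1) sub] .
  ultimately show ?thesis using SN(3) S1(2) N1(2) by linarith
qed



lemma diss_struct:
  assumes finV: "finite V" and finE: "finite E"
    and edges2: "\<forall>e\<in>E. card e = 2"
    and ds: "diss_set V E I"
  shows "2 * card (induced_edges E I) \<le> card I"
    and "2 * card (induced_edges E I) = card I \<Longrightarrow> \<forall>v\<in>I. induced_degree E I v = 1"
proof -
  define K where "K = induced_edges E I"
  have KE: "K \<subseteq> E" and KI: "\<And>e. e \<in> K \<Longrightarrow> e \<subseteq> I" unfolding K_def induced_edges_def by auto
  have finK: "finite K" using finite_subset[OF KE finE] .
  have IV: "I \<subseteq> V" and deg: "\<And>v. v \<in> I \<Longrightarrow> card {e \<in> K. v \<in> e} \<le> 1"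
    using ds unfolding diss_set_def induced_degree_def K_def by auto
  have Kdisj: "\<And>e f. e \<in> K \<Longrightarrow> f \<in> K \<Longrightarrow> e \<noteq> f \<Longrightarrow> e \<inter> f = {}"
  proof (rule ccontr)
    fix e f assume ef: "e \<in> K" "f \<in> K" "e \<noteq> f" "e \<inter> f \<noteq> {}"
    then obtain v where v: "v \<in> e" "v \<in> f" by blast
    then have "v \<in> I" using KI ef(1) by blast
    have "{e, f} \<subseteq> {e \<in> K. v \<in> e}" using ef v by blast
    moreover have "finite {e \<in> K. v \<in> e}" using finK by simp
    ultimately have "card {e, f} \<le> card {e \<in> K. v \<in> e}" by (rule card_mono[rotated])
    then have "2 \<le> card {e \<in> K. v \<in> e}" using ef(3) by simp
    then show False using deg[OF \<open>v \<in> I\<close>] by simp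
  qed
  have finI: "\<And>e. e \<in> K \<Longrightarrow> finite e" using edges2 KE
    by (metis card.infinite subsetD zero_neq_numeral)
  have "card (\<Union>K) = sum card K"
    by (rule card_Union_disjoint) (use Kdisj finI in \<open>auto simp: pairwise_def disjnt_def\<close>)
  also have "\<dots> = sum (\<lambda>e. 2) K" using edges2 KE by (intro sum.cong) auto
  finally have cU: "card (\<Union>K) = 2 * card K" by simp
  have UI: "\<Union>K \<subseteq> I" using KI by blast
  have finII: "finite I" using finite_subset[OF IV finV] .
  show "2 * card (induced_edges E I) \<le> card I"
    using card_mono[OF finII UI] cU unfolding K_def by simp
  show "\<forall>v\<in>I. induced_degree E I v = 1" if eq: "2 * card (induced_edges E I) = card I"
  proof
    fix v assume v: "v \<in> I"
    have "\<Union>K = I" using card_subset_eq[OF finII UI] cU eq unfolding K_def by simp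
    then obtain e where e: "e \<in> K" "v \<in> e" using v by blast
    then have "{e \<in> K. v \<in> e} \<noteq> {}" by blast
    moreover have "finite {e \<in> K. v \<in> e}" using finK by simp
    ultimately have "card {e \<in> K. v \<in> e} \<ge> 1"
      by (metis One_nat_def Suc_leI card_gt_0_iff)
    then show "induced_degree E I v = 1" using deg[OF v] unfolding induced_degree_def K_def by simp
  qed
qed

theorem mainTheorem3:
  fixes V :: "'a set" and E M :: "'a set set"
  assumes "simple_graph V E"
    and "bipartite V E"
    and "max_matching E M"
    and "real (diss V E) = 4 / 3 * real (alpha V (E - M))"
  shows "alpha V (E - M) = alpha V E \<and>
         matching_number E = matching_number (E - M) \<and>
         (\<forall>I. max_diss_set V E I \<longrightarrow>
           (\<forall>v\<in>I. induced_degree E I v = 1) \<and>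
           2 * card (induced_edges E I \<inter> M) = card (induced_edges E I) \<and>
           4 * card (induced_edges E I \<inter> M) = diss V E)"
proof -
  have finV: "finite V" and sg: "\<forall>e\<in>E. \<exists>u v. e = {u,v} \<and> u \<noteq> v \<and> u \<in> V \<and> v \<in> V"
    using assms(1) unfolding simple_graph_def by auto
  obtain A B where AB: "A \<union> B = V" "A \<inter> B = {}" "\<forall>e\<in>E. card (e \<inter> A) = 1 \<and> card (e \<inter> B) = 1"
    using assms(2) unfolding bipartite_def by blast
  have edgesAB: "\<forall>e\<in>E. \<exists>a b. e = {a,b} \<and> a \<in> A \<and> b \<in> B"
  proof
    fix e assume e: "e \<in> E"
    obtain u v where uv: "e = {u,v}" "u \<noteq> v" "u \<in> V" "v \<in> V" using sg e by blast
    have cA: "card (e \<inter> A) = 1" and cB: "card (e \<inter> B) = 1" using AB(3) e by auto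
    show "\<exists>a b. e = {a,b} \<and> a \<in> A \<and> b \<in> B"
    proof (cases "u \<in> A")
      case True
      have "v \<notin> A"
      proof
        assume "v \<in> A"
        then have "e \<inter> A = {u,v}" using True uv(1) by blast
        then show False using cA uv(2) by simp
      qed
      then have "v \<in> B" using AB(1) uv(4) by blast
      then show ?thesis using True uv(1) by blast
    next
      case False
      then have uB: "u \<in> B" using AB(1) uv(3) by blast
      have "v \<in> A"
      proof (rule ccontr)
        assume "v \<notin> A"
        then have "e \<inter> A = {}" using False uv(1) by blast
        then show False using cA by simp
      qed
      then show ?thesis using uB uv(1) by blast
    qed
  qed
  have edgesABM: "\<forall>e\<in>E - M. \<exists>a b. e = {a,b} \<and> a \<in> A \<and> b \<in> B"
    using edgesAB by (meson DiffD1)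
  have sub: "\<forall>e\<in>E. e \<subseteq> V"
  proof
    fix e assume "e \<in> E"
    then obtain u v where "e = {u,v}" "u \<in> V" "v \<in> V" using sg by blast
    then show "e \<subseteq> V" by simp
  qed
  have "E \<subseteq> Pow V" using sub by blast
  then have finE: "finite E" using finV by (simp add: finite_subset)
  have edges2: "\<forall>e\<in>E. card e = 2"
  proof
    fix e assume "e \<in> E"
    then obtain u v where "e = {u,v}" "u \<noteq> v" using sg by blast
    then show "card e = 2" by simp
  qed
  have ne0M: "\<forall>e\<in>E - M. e \<noteq> {}"
  proof
    fix e assume "e \<in> E - M"
    then obtain u v where "e = {u,v}" using sg by blast
    then show "e \<noteq> {}" by simp
  qed
  have mM: "matching E M" and maxM: "\<And>M'. matching E M' \<Longrightarrow> card M' \<le> card M"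
    using assms(3) unfolding max_matching_def by auto
  have ME: "M \<subseteq> E" and Mdj: "\<And>e f. e \<in> M \<Longrightarrow> f \<in> M \<Longrightarrow> e \<noteq> f \<Longrightarrow> e \<inter> f = {}"
    using mM unfolding matching_def by auto
  have nuE: "matching_number E = card M"
  proof -
    obtain N where N: "matching E N" "card N = matching_number E" using nu_props(1)[OF finE] by blast
    show ?thesis using maxM[OF N(1)] N(2) nu_props(2)[OF finE mM] by simp
  qed
  have nuEM_le: "matching_number (E - M) \<le> card M"
  proof -
    have finEM: "finite (E - M)" using finE by simp
    obtain N where N: "matching (E - M) N" "card N = matching_number (E - M)"
      using nu_props(1)[OF finEM] by blast
    have "matching E N" using N(1) unfolding matching_def by blast
    then show ?thesis using maxM[of N] N(2) by simp
  qed
  have KG: "alpha V E + matching_number E = card V" by (rule konig_eq[OF finV AB(1,2) edgesAB])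
  have KGM: "alpha V (E - M) + matching_number (E - M) = card V" by (rule konig_eq[OF finV AB(1,2) edgesABM])
  have "real (3 * diss V E) = real (4 * alpha V (E - M))" using assms(4) by simp
  then have ratio: "3 * diss V E = 4 * alpha V (E - M)" by (simp only: of_nat_eq_iff)
  have claim: "card V = alpha V (E - M) + card M \<and>
           (\<forall>v\<in>I. induced_degree E I v = 1) \<and>
           2 * card (induced_edges E I \<inter> M) = card (induced_edges E I) \<and>
           4 * card (induced_edges E I \<inter> M) = diss V E" if mds: "max_diss_set V E I" for I
  proof -
    have ds: "diss_set V E I" and cI: "card I = diss V E" using mds unfolding max_diss_set_def by auto
    have IV: "I \<subseteq> V" using ds unfolding diss_set_def by auto
    have finI: "finite I" using finite_subset[OF IV finV] .
    define K where "K = induced_edges E I"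
    have KE: "K \<subseteq> E" and KI: "\<And>e. e \<in> K \<Longrightarrow> e \<subseteq> I" unfolding K_def induced_edges_def by auto
    have Kiff: "\<And>e. e \<in> E \<Longrightarrow> e \<subseteq> I \<Longrightarrow> e \<in> K" unfolding K_def induced_edges_def by auto
    have finK: "finite K" using finite_subset[OF KE finE] .
    define a where "a = card (K \<inter> M)"
    define b where "b = card (K - M)"
    have cK: "card K = a + b"
    proof -
      have "K = (K \<inter> M) \<union> (K - M)" by blast
      moreover have "(K \<inter> M) \<inter> (K - M) = {}" by blast
      ultimately show ?thesis unfolding a_def b_def using finK
        by (metis card_Un_disjoint finite_Diff finite_Int)
    qed
    have F1: "card I \<le> alpha V (E - M) + b"
    proof -
      define h where "h e = (SOME x. x \<in> e)" for e :: "'a set"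
      have h: "\<And>e. e \<in> E \<Longrightarrow> h e \<in> e"
      proof -
        fix e assume "e \<in> E"
        then have "e \<noteq> {}" using sg by blast
        then show "h e \<in> e" unfolding h_def by (meson ex_in_conv someI_ex)
      qed
      define S1 where "S1 = I - h ` (K - M)"
      have ind: "indep_set V (E - M) S1"
        unfolding indep_set_def
      proof (intro conjI ballI)
        show "S1 \<subseteq> V" using IV unfolding S1_def by blast
      next
        fix e assume e: "e \<in> E - M"
        show "\<not> e \<subseteq> S1"
        proof
          assume es: "e \<subseteq> S1"
          then have "e \<subseteq> I" unfolding S1_def by blast
          then have "e \<in> K - M" using Kiff e by blast
          then have "h e \<in> h ` (K - M)" by blast
          moreover have "h e \<in> S1" using h e es by blast
          ultimately show False unfolding S1_def by blast
        qed
      qed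
      have "card S1 \<le> alpha V (E - M)" by (rule alpha_props(2)[OF finV ne0M ind])
      moreover have "card I - card (h ` (K - M)) \<le> card S1"
        unfolding S1_def by (rule diff_card_le_card_Diff) (use finK in simp)
      moreover have "card (h ` (K - M)) \<le> b" unfolding b_def by (rule card_image_le) (use finK in simp)
      ultimately show ?thesis by linarith
    qed
    have F2: "card M + card I \<le> a + card V"
    proof -
      have ex: "\<forall>e\<in>M - K. \<exists>x. x \<in> e - I"
      proof
        fix e assume e: "e \<in> M - K"
        then have "e \<in> E" using ME by blast
        then have "\<not> e \<subseteq> I" using Kiff e by blast
        then show "\<exists>x. x \<in> e - I" by blast
      qed
      define h where "h e = (SOME x. x \<in> e - I)" for e
      have h: "\<And>e. e \<in> M - K \<Longrightarrow> h e \<in> e - I" unfolding h_def using ex by (metis someI_ex)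
      have inj: "inj_on h (M - K)"
      proof (rule inj_onI)
        fix e e' assume ee: "e \<in> M - K" "e' \<in> M - K" "h e = h e'"
        then have "h e \<in> e \<inter> e'" using h[of e] h[of e'] by simp
        then show "e = e'" using Mdj[of e e'] ee by blast
      qed
      have img: "h ` (M - K) \<subseteq> V - I"
      proof
        fix x assume "x \<in> h ` (M - K)"
        then obtain e where e: "e \<in> M - K" "x = h e" by blast
        then have "e \<subseteq> V" using ME sub by blast
        then show "x \<in> V - I" using h[OF e(1)] e(2) by blast
      qed
      have "card (M - K) = card (h ` (M - K))" using card_image[OF inj] by simp
      also have "\<dots> \<le> card (V - I)" using card_mono[OF _ img] finV by simp
      also have "\<dots> = card V - card I" using card_Diff_subset[OF finI IV] .
      finally have c1: "card (M - K) \<le> card V - card I" .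
      have finM: "finite M" using finite_subset[OF ME finE] .
      have "M = (M \<inter> K) \<union> (M - K)" by blast
      moreover have "(M \<inter> K) \<inter> (M - K) = {}" by blast
      ultimately have "card M = card (M \<inter> K) + card (M - K)" using finM
        by (metis card_Un_disjoint finite_Diff finite_Int)
      moreover have "card (M \<inter> K) = a" unfolding a_def by (simp add: Int_commute)
      moreover have "card I \<le> card V" using card_mono[OF finV IV] .
      ultimately show ?thesis using c1 by linarith
    qed
    have F3: "card V \<le> alpha V (E - M) + card M" using KGM nuEM_le by linarith
    have F4: "2 * card K \<le> card I" unfolding K_def by (rule diss_struct(1)[OF finV finE edges2 ds])
    have F5: "3 * card I = 4 * alpha V (E - M)" using ratio cI by simp
    have R1: "2 * card K = card I" using F1 F2 F3 F4 F5 cK by linarith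
    have G1: "card I \<le> alpha V (E - M) + a" using F2 F3 by linarith
    have G2: "card I = alpha V (E - M) + a" using F1 G1 F5 R1 cK by linarith
    have G3: "card I = alpha V (E - M) + b" using F1 G1 F5 R1 cK by linarith
    have R2: "2 * a = card K" using G2 G3 cK by linarith
    have R3: "4 * a = card I" using G2 F5 by linarith
    have R4: "card V = alpha V (E - M) + card M" using F2 F3 G2 by linarith
    have deg: "\<forall>v\<in>I. induced_degree E I v = 1"
      by (rule diss_struct(2)[OF finV finE edges2 ds]) (use R1 in \<open>simp add: K_def\<close>)
    show ?thesis using R2 R3 R4 deg cI unfolding a_def K_def by simp
  qed
  obtain I0 where I0: "diss_set V E I0" "card I0 = diss V E" using diss_props[OF finV] by blast
  have "max_diss_set V E I0" using I0 unfolding max_diss_set_def by simp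
  then have cV: "card V = alpha V (E - M) + card M" using claim by blast
  have nuEM: "matching_number (E - M) = card M" using cV KGM by linarith
  have alE: "alpha V E = alpha V (E - M)" using cV KG nuE by linarith
  show ?thesis using claim nuEM nuE alE by simp
qed


end
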